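(* Let $(A,B,Z,T)$ be a Hopf-Galois system over a field $k$, with structure maps $\alpha,\beta,\gamma,\delta,S$ as in the context. Then $Z$ is an $A$-$B$-biGalois extension, i.e. the linear maps $$\kappa_l=(1_A\otimes m_Z)\circ(\alpha\otimes 1_Z):Z\otimes Z\to A\otimes Z,\qquad \kappa_r=(m_Z\otimes 1_B)\circ(1_Z\otimes\beta):Z\otimes Z\to Z\otimes B$$ are both bijective.
   Context: All tensor products are over a field $k$; $m_X$, $u_X$ denote multiplication and unit of an algebra $X$, $\Delta_X,\varepsilon_X$ comultiplication and counit of a bialgebra $X$. A Hopf-Galois system consists of four non-zero $k$-algebras $(A,B,Z,T)$ such that: (HG1) $A$ and $B$ are bialgebras; (HG2) $Z$ is an $A$-$B$-bicomodule algebra, with left $A$-coaction $\alpha:Z\to A\otimes Z$ and right $B$-coaction $\beta:Z\to Z\otimes B$ (both algebra morphisms, commuting with each other); (HG3) there are algebra morphisms $\gamma:A\to Z\otimes T$ and $\delta:B\to T\otimes Z$ such that $(\gamma\otimes 1_Z)\circ\alpha=(1_Z\otimes\delta)\circ\beta$, $(\alpha\otimes 1_T)\circ\gamma=(1_A\otimes\gamma)\circ\Delta_A$, and $(1_T\otimes\beta)\circ\delta=(\delta\otimes 1_B)\circ\Delta_B$; (HG4) there is a linear map $S:T\to Z$ such that $m_Z\circ(1_Z\otimes S)\circ\gamma=u_Z\circ\varepsilon_A$ and $m_Z\circ(S\otimes 1_Z)\circ\delta=u_Z\circ\varepsilon_B$. *)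

theory Defs
  imports Main
begin

text \<open>
Model: every vector space over the field 'k has a basis, so a k-vector space with basis
indexed by a type 'a is represented as the space of finitely supported functions
'a => 'k (the carrier fsupp).  The tensor product of the spaces with bases 'a and 'b is
the space with basis 'a * 'b; the tensor of vectors u, v is (x,y) |-> u x * v y.
Linear maps are functions on vectors which are linear on fsupp; all equations between
maps are required on fsupp.  The ground field k (as a 1-dimensional space) is 'k itself.
\<close>

definition fsupp :: "('a \<Rightarrow> 'k::zero) set" where
  "fsupp = {v. finite {x. v x \<noteq> 0}}"

definition vsupp :: "('a \<Rightarrow> 'k::zero) \<Rightarrow> 'a set" where
  "vsupp v = {x. v x \<noteq> 0}"

definition delta :: "'a \<Rightarrow> 'a \<Rightarrow> 'k::zero_neq_one" where
  "delta x = (\<lambda>y. if y = x then 1 else 0)"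

definition vadd :: "('a \<Rightarrow> 'k::plus) \<Rightarrow> ('a \<Rightarrow> 'k) \<Rightarrow> 'a \<Rightarrow> 'k" where
  "vadd u v = (\<lambda>x. u x + v x)"

definition smult :: "'k::times \<Rightarrow> ('a \<Rightarrow> 'k) \<Rightarrow> 'a \<Rightarrow> 'k" where
  "smult c v = (\<lambda>x. c * v x)"

definition linmap :: "(('a \<Rightarrow> 'k::field) \<Rightarrow> ('b \<Rightarrow> 'k)) \<Rightarrow> bool" where
  "linmap F \<longleftrightarrow> (\<forall>v\<in>fsupp. F v \<in> fsupp)
     \<and> (\<forall>u\<in>fsupp. \<forall>v\<in>fsupp. F (vadd u v) = vadd (F u) (F v))
     \<and> (\<forall>c. \<forall>v\<in>fsupp. F (smult c v) = smult c (F v))"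

definition linfun :: "(('a \<Rightarrow> 'k::field) \<Rightarrow> 'k) \<Rightarrow> bool" where
  "linfun f \<longleftrightarrow> (\<forall>u\<in>fsupp. \<forall>v\<in>fsupp. f (vadd u v) = f u + f v)
     \<and> (\<forall>c. \<forall>v\<in>fsupp. f (smult c v) = c * f v)"

definition lext :: "('a \<Rightarrow> 'b \<Rightarrow> 'k::comm_semiring_1) \<Rightarrow> ('a \<Rightarrow> 'k) \<Rightarrow> 'b \<Rightarrow> 'k" where
  "lext f v = (\<lambda>y. \<Sum>x\<in>vsupp v. v x * f x y)"

definition tens :: "('a \<Rightarrow> 'k::times) \<Rightarrow> ('b \<Rightarrow> 'k) \<Rightarrow> 'a \<times> 'b \<Rightarrow> 'k" where
  "tens u v = (\<lambda>(x, y). u x * v y)"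

definition tmap :: "(('a \<Rightarrow> 'k) \<Rightarrow> ('c \<Rightarrow> 'k)) \<Rightarrow> (('b \<Rightarrow> 'k) \<Rightarrow> ('d \<Rightarrow> 'k))
    \<Rightarrow> ('a \<times> 'b \<Rightarrow> 'k::comm_semiring_1) \<Rightarrow> 'c \<times> 'd \<Rightarrow> 'k" where
  "tmap F G = lext (\<lambda>(x, y). tens (F (delta x)) (G (delta y)))"

definition tassoc :: "(('a \<times> 'b) \<times> 'c \<Rightarrow> 'k) \<Rightarrow> 'a \<times> ('b \<times> 'c) \<Rightarrow> 'k" where
  "tassoc w = (\<lambda>(a, (b, c)). w ((a, b), c))"

definition tunassoc :: "('a \<times> ('b \<times> 'c) \<Rightarrow> 'k) \<Rightarrow> ('a \<times> 'b) \<times> 'c \<Rightarrow> 'k" where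
  "tunassoc w = (\<lambda>((a, b), c). w (a, (b, c)))"

text \<open>(f (x) 1) : X (x) Y -> k (x) Y = Y  and  (1 (x) f) : X (x) Y -> X (x) k = X
  for a linear functional f.\<close>
definition lcontr :: "(('a \<Rightarrow> 'k) \<Rightarrow> 'k) \<Rightarrow> ('a \<times> 'b \<Rightarrow> 'k::comm_semiring_1) \<Rightarrow> 'b \<Rightarrow> 'k" where
  "lcontr f = lext (\<lambda>(x, y). smult (f (delta x)) (delta y))"

definition rcontr :: "(('b \<Rightarrow> 'k) \<Rightarrow> 'k) \<Rightarrow> ('a \<times> 'b \<Rightarrow> 'k::comm_semiring_1) \<Rightarrow> 'a \<Rightarrow> 'k" where
  "rcontr f = lext (\<lambda>(x, y). smult (f (delta y)) (delta x))"

definition tmid :: "(('a \<times> 'b) \<times> ('a \<times> 'b) \<Rightarrow> 'k) \<Rightarrow> ('a \<times> 'a) \<times> ('b \<times> 'b) \<Rightarrow> 'k" where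
  "tmid w = (\<lambda>((a, a'), (b, b')). w ((a, b), (a', b')))"

definition tens_mult :: "(('a \<times> 'a \<Rightarrow> 'k) \<Rightarrow> ('a \<Rightarrow> 'k)) \<Rightarrow> (('b \<times> 'b \<Rightarrow> 'k) \<Rightarrow> ('b \<Rightarrow> 'k))
    \<Rightarrow> (('a \<times> 'b) \<times> ('a \<times> 'b) \<Rightarrow> 'k::comm_semiring_1) \<Rightarrow> 'a \<times> 'b \<Rightarrow> 'k" where
  "tens_mult m1 m2 = (\<lambda>w. tmap m1 m2 (tmid w))"

definition is_algebra :: "(('a \<times> 'a \<Rightarrow> 'k::field) \<Rightarrow> ('a \<Rightarrow> 'k)) \<Rightarrow> ('a \<Rightarrow> 'k) \<Rightarrow> bool" where
  "is_algebra m u \<longleftrightarrow> linmap m \<and> u \<in> fsupp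
     \<and> (\<forall>w\<in>fsupp. m (tmap m id w) = m (tmap id m (tassoc w)))
     \<and> (\<forall>v\<in>fsupp. m (tens u v) = v \<and> m (tens v u) = v)"

definition nonzero_algebra :: "('a \<Rightarrow> 'k::zero) \<Rightarrow> bool" where
  "nonzero_algebra u \<longleftrightarrow> u \<noteq> (\<lambda>_. 0)"

definition alg_hom :: "(('a \<times> 'a \<Rightarrow> 'k::field) \<Rightarrow> ('a \<Rightarrow> 'k)) \<Rightarrow> ('a \<Rightarrow> 'k)
    \<Rightarrow> (('b \<times> 'b \<Rightarrow> 'k) \<Rightarrow> ('b \<Rightarrow> 'k)) \<Rightarrow> ('b \<Rightarrow> 'k) \<Rightarrow> (('a \<Rightarrow> 'k) \<Rightarrow> ('b \<Rightarrow> 'k)) \<Rightarrow> bool" where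
  "alg_hom m1 u1 m2 u2 f \<longleftrightarrow> linmap f \<and> f u1 = u2
     \<and> (\<forall>v\<in>fsupp. \<forall>w\<in>fsupp. f (m1 (tens v w)) = m2 (tens (f v) (f w)))"

definition is_bialgebra :: "(('a \<times> 'a \<Rightarrow> 'k::field) \<Rightarrow> ('a \<Rightarrow> 'k)) \<Rightarrow> ('a \<Rightarrow> 'k)
    \<Rightarrow> (('a \<Rightarrow> 'k) \<Rightarrow> ('a \<times> 'a \<Rightarrow> 'k)) \<Rightarrow> (('a \<Rightarrow> 'k) \<Rightarrow> 'k) \<Rightarrow> bool" where
  "is_bialgebra m u D e \<longleftrightarrow> is_algebra m u \<and> linmap D \<and> linfun e
     \<and> (\<forall>v\<in>fsupp. tassoc (tmap D id (D v)) = tmap id D (D v))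
     \<and> (\<forall>v\<in>fsupp. lcontr e (D v) = v \<and> rcontr e (D v) = v)
     \<and> alg_hom m u (tens_mult m m) (tens u u) D
     \<and> e u = 1 \<and> (\<forall>v\<in>fsupp. \<forall>w\<in>fsupp. e (m (tens v w)) = e v * e w)"

definition left_comod_alg :: "(('a \<times> 'a \<Rightarrow> 'k::field) \<Rightarrow> ('a \<Rightarrow> 'k)) \<Rightarrow> ('a \<Rightarrow> 'k)
    \<Rightarrow> (('a \<Rightarrow> 'k) \<Rightarrow> ('a \<times> 'a \<Rightarrow> 'k)) \<Rightarrow> (('a \<Rightarrow> 'k) \<Rightarrow> 'k)
    \<Rightarrow> (('z \<times> 'z \<Rightarrow> 'k) \<Rightarrow> ('z \<Rightarrow> 'k)) \<Rightarrow> ('z \<Rightarrow> 'k)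
    \<Rightarrow> (('z \<Rightarrow> 'k) \<Rightarrow> ('a \<times> 'z \<Rightarrow> 'k)) \<Rightarrow> bool" where
  "left_comod_alg mA uA DA eA mZ uZ al \<longleftrightarrow>
     alg_hom mZ uZ (tens_mult mA mZ) (tens uA uZ) al
     \<and> (\<forall>z\<in>fsupp. tassoc (tmap DA id (al z)) = tmap id al (al z))
     \<and> (\<forall>z\<in>fsupp. lcontr eA (al z) = z)"

definition right_comod_alg :: "(('b \<times> 'b \<Rightarrow> 'k::field) \<Rightarrow> ('b \<Rightarrow> 'k)) \<Rightarrow> ('b \<Rightarrow> 'k)
    \<Rightarrow> (('b \<Rightarrow> 'k) \<Rightarrow> ('b \<times> 'b \<Rightarrow> 'k)) \<Rightarrow> (('b \<Rightarrow> 'k) \<Rightarrow> 'k)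
    \<Rightarrow> (('z \<times> 'z \<Rightarrow> 'k) \<Rightarrow> ('z \<Rightarrow> 'k)) \<Rightarrow> ('z \<Rightarrow> 'k)
    \<Rightarrow> (('z \<Rightarrow> 'k) \<Rightarrow> ('z \<times> 'b \<Rightarrow> 'k)) \<Rightarrow> bool" where
  "right_comod_alg mB uB DB eB mZ uZ be \<longleftrightarrow>
     alg_hom mZ uZ (tens_mult mZ mB) (tens uZ uB) be
     \<and> (\<forall>z\<in>fsupp. tassoc (tmap be id (be z)) = tmap id DB (be z))
     \<and> (\<forall>z\<in>fsupp. rcontr eB (be z) = z)"

definition hopf_galois_system ::
  "(('a \<times> 'a \<Rightarrow> 'k::field) \<Rightarrow> ('a \<Rightarrow> 'k)) \<Rightarrow> ('a \<Rightarrow> 'k)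
    \<Rightarrow> (('a \<Rightarrow> 'k) \<Rightarrow> ('a \<times> 'a \<Rightarrow> 'k)) \<Rightarrow> (('a \<Rightarrow> 'k) \<Rightarrow> 'k)
   \<Rightarrow> (('b \<times> 'b \<Rightarrow> 'k) \<Rightarrow> ('b \<Rightarrow> 'k)) \<Rightarrow> ('b \<Rightarrow> 'k)
    \<Rightarrow> (('b \<Rightarrow> 'k) \<Rightarrow> ('b \<times> 'b \<Rightarrow> 'k)) \<Rightarrow> (('b \<Rightarrow> 'k) \<Rightarrow> 'k)
   \<Rightarrow> (('z \<times> 'z \<Rightarrow> 'k) \<Rightarrow> ('z \<Rightarrow> 'k)) \<Rightarrow> ('z \<Rightarrow> 'k)
   \<Rightarrow> (('t \<times> 't \<Rightarrow> 'k) \<Rightarrow> ('t \<Rightarrow> 'k)) \<Rightarrow> ('t \<Rightarrow> 'k)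
   \<Rightarrow> (('z \<Rightarrow> 'k) \<Rightarrow> ('a \<times> 'z \<Rightarrow> 'k)) \<Rightarrow> (('z \<Rightarrow> 'k) \<Rightarrow> ('z \<times> 'b \<Rightarrow> 'k))
   \<Rightarrow> (('a \<Rightarrow> 'k) \<Rightarrow> ('z \<times> 't \<Rightarrow> 'k)) \<Rightarrow> (('b \<Rightarrow> 'k) \<Rightarrow> ('t \<times> 'z \<Rightarrow> 'k))
   \<Rightarrow> (('t \<Rightarrow> 'k) \<Rightarrow> ('z \<Rightarrow> 'k)) \<Rightarrow> bool" where
  "hopf_galois_system mA uA DA eA mB uB DB eB mZ uZ mT uT al be ga de S \<longleftrightarrow>
     \<comment> \<open>four non-zero algebras\<close>
     is_algebra mA uA \<and> is_algebra mB uB \<and> is_algebra mZ uZ \<and> is_algebra mT uT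
     \<and> nonzero_algebra uA \<and> nonzero_algebra uB \<and> nonzero_algebra uZ \<and> nonzero_algebra uT
     \<comment> \<open>(HG1)\<close>
     \<and> is_bialgebra mA uA DA eA \<and> is_bialgebra mB uB DB eB
     \<comment> \<open>(HG2)\<close>
     \<and> left_comod_alg mA uA DA eA mZ uZ al \<and> right_comod_alg mB uB DB eB mZ uZ be
     \<and> (\<forall>z\<in>fsupp. tassoc (tmap al id (be z)) = tmap id be (al z))
     \<comment> \<open>(HG3)\<close>
     \<and> alg_hom mA uA (tens_mult mZ mT) (tens uZ uT) ga
     \<and> alg_hom mB uB (tens_mult mT mZ) (tens uT uZ) de
     \<and> (\<forall>z\<in>fsupp. tassoc (tmap ga id (al z)) = tmap id de (be z))
     \<and> (\<forall>a\<in>fsupp. tassoc (tmap al id (ga a)) = tmap id ga (DA a))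
     \<and> (\<forall>b\<in>fsupp. tmap id be (de b) = tassoc (tmap de id (DB b)))
     \<comment> \<open>(HG4)\<close>
     \<and> linmap S
     \<and> (\<forall>a\<in>fsupp. mZ (tmap id S (ga a)) = smult (eA a) uZ)
     \<and> (\<forall>b\<in>fsupp. mZ (tmap S id (de b)) = smult (eB b) uZ)"

definition kappa_l :: "(('z \<Rightarrow> 'k) \<Rightarrow> ('a \<times> 'z \<Rightarrow> 'k)) \<Rightarrow> (('z \<times> 'z \<Rightarrow> 'k) \<Rightarrow> ('z \<Rightarrow> 'k))
    \<Rightarrow> ('z \<times> 'z \<Rightarrow> 'k::comm_semiring_1) \<Rightarrow> 'a \<times> 'z \<Rightarrow> 'k" where
  "kappa_l al mZ w = tmap id mZ (tassoc (tmap al id w))"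

definition kappa_r :: "(('z \<Rightarrow> 'k) \<Rightarrow> ('z \<times> 'b \<Rightarrow> 'k)) \<Rightarrow> (('z \<times> 'z \<Rightarrow> 'k) \<Rightarrow> ('z \<Rightarrow> 'k))
    \<Rightarrow> ('z \<times> 'z \<Rightarrow> 'k::comm_semiring_1) \<Rightarrow> 'z \<times> 'b \<Rightarrow> 'k" where
  "kappa_r be mZ w = tmap mZ id (tunassoc (tmap id be w))"

end

theory Submission
  imports Defs
begin


lemma fsupp_iff: "v \<in> fsupp \<longleftrightarrow> finite (vsupp v)"
  by (simp add: fsupp_def vsupp_def)

lemma lext_superset:
  assumes "finite S" "vsupp v \<subseteq> S"
  shows "lext f v = (\<lambda>y. \<Sum>x\<in>S. v x * f x y)"
  unfolding lext_def
  by (rule ext, rule sum.mono_neutral_left) (use assms in \<open>auto simp: vsupp_def\<close>)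

lemma fsupp_sum:
  assumes "finite I" "\<forall>i\<in>I. g i \<in> fsupp"
  shows "(\<lambda>y. \<Sum>i\<in>I. (c i :: 'k::field) * g i y) \<in> fsupp"
proof -
  have "vsupp (\<lambda>y. \<Sum>i\<in>I. c i * g i y) \<subseteq> (\<Union>i\<in>I. vsupp (g i))"
  proof
    fix y assume "y \<in> vsupp (\<lambda>y. \<Sum>i\<in>I. c i * g i y)"
    then have "(\<Sum>i\<in>I. c i * g i y) \<noteq> 0" by (simp add: vsupp_def)
    then obtain i where "i \<in> I" "c i * g i y \<noteq> 0" by (meson sum.neutral)
    then show "y \<in> (\<Union>i\<in>I. vsupp (g i))" by (auto simp: vsupp_def)
  qed
  moreover have "finite (\<Union>i\<in>I. vsupp (g i))" using assms by (auto simp: fsupp_iff)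
  ultimately show ?thesis by (simp add: fsupp_iff finite_subset)
qed

lemma lext_fsupp:
  fixes v :: "'a \<Rightarrow> 'k::field"
  assumes "v \<in> fsupp" "\<forall>x. f x \<in> fsupp"
  shows "lext f v \<in> fsupp"
  unfolding lext_def using assms by (intro fsupp_sum) (auto simp: fsupp_iff)

lemma zero_fsupp: "(\<lambda>_. 0) \<in> fsupp" by (simp add: fsupp_def)

lemma vadd_fsupp: "u \<in> fsupp \<Longrightarrow> v \<in> fsupp \<Longrightarrow> vadd u (v::'a\<Rightarrow>'k::monoid_add) \<in> fsupp"
  unfolding fsupp_iff vsupp_def vadd_def
  by (rule finite_subset[of _ "{x. u x \<noteq> 0} \<union> {x. v x \<noteq> 0}"]) auto

lemma smult_fsupp: "v \<in> fsupp \<Longrightarrow> smult c (v::'a\<Rightarrow>'k::mult_zero) \<in> fsupp"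
  unfolding fsupp_iff vsupp_def smult_def
  by (rule finite_subset[of _ "{x. v x \<noteq> 0}"]) auto

lemma delta_fsupp: "delta x \<in> fsupp"
  unfolding fsupp_def delta_def by simp

lemma linmap_lext:
  assumes "\<forall>x. f x \<in> fsupp"
  shows "linmap (lext (f :: 'a \<Rightarrow> 'b \<Rightarrow> 'k::field))"
  unfolding linmap_def
proof (intro conjI ballI allI)
  fix v :: "'a \<Rightarrow> 'k" assume "v \<in> fsupp" then show "lext f v \<in> fsupp" using assms lext_fsupp by blast
next
  fix u v :: "'a \<Rightarrow> 'k" assume u: "u \<in> fsupp" and v: "v \<in> fsupp"
  let ?S = "vsupp u \<union> vsupp v"
  have fS: "finite ?S" using u v by (simp add: fsupp_iff)
  have "lext f (vadd u v) = (\<lambda>y. \<Sum>x\<in>?S. vadd u v x * f x y)"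
    by (rule lext_superset[OF fS]) (auto simp: vsupp_def vadd_def)
  moreover have "lext f u = (\<lambda>y. \<Sum>x\<in>?S. u x * f x y)"
    by (rule lext_superset[OF fS]) auto
  moreover have "lext f v = (\<lambda>y. \<Sum>x\<in>?S. v x * f x y)"
    by (rule lext_superset[OF fS]) auto
  ultimately show "lext f (vadd u v) = vadd (lext f u) (lext f v)"
    by (simp add: vadd_def distrib_right sum.distrib)
next
  fix c :: 'k and v :: "'a \<Rightarrow> 'k" assume v: "v \<in> fsupp"
  have fS: "finite (vsupp v)" using v by (simp add: fsupp_iff)
  have "lext f (smult c v) = (\<lambda>y. \<Sum>x\<in>vsupp v. smult c v x * f x y)"
    by (rule lext_superset[OF fS]) (auto simp: vsupp_def smult_def)
  then show "lext f (smult c v) = smult c (lext f v)"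
    by (simp add: smult_def lext_def sum_distrib_left mult.assoc)
qed

lemma lin_fsupp: "linmap F \<Longrightarrow> v \<in> fsupp \<Longrightarrow> F v \<in> fsupp"
  by (simp add: linmap_def)

lemma lin_add: "linmap F \<Longrightarrow> u \<in> fsupp \<Longrightarrow> v \<in> fsupp \<Longrightarrow> F (vadd u v) = vadd (F u) (F v)"
  by (simp add: linmap_def)

lemma lin_smult: "linmap F \<Longrightarrow> v \<in> fsupp \<Longrightarrow> F (smult c v) = smult c (F v)"
  by (simp add: linmap_def)

lemma lin_zero:
  assumes "linmap F" shows "F (\<lambda>_. 0) = (\<lambda>_. 0)"
proof -
  have "F (smult 0 (\<lambda>_. 0)) = smult 0 (F (\<lambda>_. 0))"
    using assms zero_fsupp by (rule lin_smult)
  then show ?thesis by (simp add: smult_def)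
qed

lemma lin_sum:
  assumes "linmap F" "finite I" "\<forall>i\<in>I. g i \<in> fsupp"
  shows "F (\<lambda>y. \<Sum>i\<in>I. c i * g i y) = (\<lambda>y. \<Sum>i\<in>I. c i * F (g i) y)"
  using assms(2,3)
proof (induction I rule: finite_induct)
  case empty
  then show ?case using lin_zero[OF assms(1)] by simp
next
  case (insert j I)
  have e: "(\<lambda>y. \<Sum>i\<in>insert j I. c i * g i y) = vadd (smult (c j) (g j)) (\<lambda>y. \<Sum>i\<in>I. c i * g i y)"
    using insert by (simp add: vadd_def smult_def)
  have "F (vadd (smult (c j) (g j)) (\<lambda>y. \<Sum>i\<in>I. c i * g i y))
     = vadd (smult (c j) (F (g j))) (F (\<lambda>y. \<Sum>i\<in>I. c i * g i y))"
    using insert assms(1) by (simp add: lin_add lin_smult smult_fsupp fsupp_sum)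
  then show ?case using insert e by (simp add: vadd_def smult_def)
qed

lemma vec_expand:
  fixes v :: "'a \<Rightarrow> 'k::field"
  assumes "v \<in> fsupp"
  shows "(\<lambda>y. \<Sum>x\<in>vsupp v. v x * delta x y) = v"
proof
  fix y
  have "(\<Sum>x\<in>vsupp v. v x * delta x y) = (\<Sum>x\<in>vsupp v. if x = y then v x else 0)"
    by (rule sum.cong) (auto simp: delta_def)
  also have "\<dots> = v y" using assms by (simp add: fsupp_iff) (simp add: vsupp_def)
  finally show "(\<Sum>x\<in>vsupp v. v x * delta x y) = v y" .
qed

lemma lin_lext:
  assumes "linmap F" "v \<in> fsupp"
  shows "F v = lext (\<lambda>x. F (delta x)) v"
proof -
  have "F v = F (\<lambda>y. \<Sum>x\<in>vsupp v. v x * delta x y)" using vec_expand[OF assms(2)] by simp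
  also have "\<dots> = (\<lambda>y. \<Sum>x\<in>vsupp v. v x * F (delta x) y)"
    using assms by (intro lin_sum) (auto simp: fsupp_iff delta_fsupp[unfolded fsupp_iff])
  finally show ?thesis by (simp add: lext_def)
qed

lemma lin_eq_delta:
  assumes "linmap F" "linmap G" "\<And>x. F (delta x) = G (delta x)" "v \<in> fsupp"
  shows "F v = G v"
  using lin_lext[OF assms(1,4)] lin_lext[OF assms(2,4)] assms(3) by simp

lemma delta_pair: "(delta (x, y) :: _ \<Rightarrow> 'k::field) = tens (delta x) (delta y)"
  by (auto simp: delta_def tens_def)

lemma tens_fsupp:
  assumes "u \<in> fsupp" "v \<in> fsupp"
  shows "tens u (v :: 'b \<Rightarrow> 'k::mult_zero) \<in> fsupp"
  unfolding fsupp_iff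
  by (rule finite_subset[of _ "vsupp u \<times> vsupp v"]) (use assms in \<open>auto simp: vsupp_def tens_def fsupp_iff\<close>)

lemma lin_eq_tens:
  assumes "linmap F" "linmap G" "\<And>u v. u \<in> fsupp \<Longrightarrow> v \<in> fsupp \<Longrightarrow> F (tens u v) = G (tens u v)" "w \<in> fsupp"
  shows "F w = G w"
  by (rule lin_eq_delta[OF assms(1,2) _ assms(4)]) (auto simp: delta_pair assms(3) delta_fsupp)

lemma lext_tens:
  fixes u :: "'a \<Rightarrow> 'k::field"
  assumes "u \<in> fsupp" "v \<in> fsupp"
  shows "lext h (tens u v) = (\<lambda>y. \<Sum>x\<in>vsupp u. \<Sum>x'\<in>vsupp v. u x * v x' * h (x, x') y)"
proof -
  have "lext h (tens u v) = (\<lambda>y. \<Sum>p\<in>vsupp u \<times> vsupp v. tens u v p * h p y)"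
    by (rule lext_superset) (use assms in \<open>auto simp: fsupp_iff vsupp_def tens_def\<close>)
  then show ?thesis by (simp add: sum.cartesian_product tens_def case_prod_beta')
qed


lemma tmap_tens:
  fixes F :: "('a \<Rightarrow> 'k::field) \<Rightarrow> ('c \<Rightarrow> 'k)" and G :: "('b \<Rightarrow> 'k) \<Rightarrow> ('d \<Rightarrow> 'k)"
  assumes F: "linmap F" and G: "linmap G" and u: "u \<in> fsupp" and v: "v \<in> fsupp"
  shows "tmap F G (tens u v) = tens (F u) (G v)"
proof
  fix p :: "'c \<times> 'd"
  obtain c d where p: "p = (c, d)" by force
  have "tmap F G (tens u v) p = (\<Sum>x\<in>vsupp u. \<Sum>x'\<in>vsupp v. u x * v x' * (F (delta x) c * G (delta x') d))"
    unfolding tmap_def lext_tens[OF u v] by (simp add: p tens_def)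
  also have "\<dots> = (\<Sum>x\<in>vsupp u. u x * F (delta x) c) * (\<Sum>x'\<in>vsupp v. v x' * G (delta x') d)"
    by (simp add: sum_product mult_ac)
  also have "\<dots> = F u c * G v d"
    using lin_lext[OF F u] lin_lext[OF G v] by (simp add: lext_def)
  finally show "tmap F G (tens u v) p = tens (F u) (G v) p" by (simp add: p tens_def)
qed

lemma linmap_tmap:
  fixes F :: "('a \<Rightarrow> 'k::field) \<Rightarrow> ('c \<Rightarrow> 'k)" and G :: "('b \<Rightarrow> 'k) \<Rightarrow> ('d \<Rightarrow> 'k)"
  assumes F: "linmap F" and G: "linmap G"
  shows "linmap (tmap F G)"
  unfolding tmap_def
  by (rule linmap_lext) (auto intro!: tens_fsupp lin_fsupp[OF F] lin_fsupp[OF G] delta_fsupp)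

lemma linmap_id: "linmap id"
  by (simp add: linmap_def)

lemma linmap_comp:
  "linmap F \<Longrightarrow> linmap G \<Longrightarrow> linmap (\<lambda>x. F (G x))"
  by (simp add: linmap_def)

lemma tmap_comp:
  fixes F :: "('a \<Rightarrow> 'k::field) \<Rightarrow> ('c \<Rightarrow> 'k)" and G :: "('b \<Rightarrow> 'k) \<Rightarrow> ('d \<Rightarrow> 'k)"
    and F' :: "('c \<Rightarrow> 'k) \<Rightarrow> ('e \<Rightarrow> 'k)" and G' :: "('d \<Rightarrow> 'k) \<Rightarrow> ('f \<Rightarrow> 'k)"
  assumes "linmap F" "linmap G" "linmap F'" "linmap G'" "w \<in> fsupp"
  shows "tmap F' G' (tmap F G w) = tmap (\<lambda>x. F' (F x)) (\<lambda>x. G' (G x)) w"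
proof (rule lin_eq_tens[of "\<lambda>w. tmap F' G' (tmap F G w)" "tmap (\<lambda>x. F' (F x)) (\<lambda>x. G' (G x))", OF _ _ _ assms(5)])
  show "linmap (\<lambda>w. tmap F' G' (tmap F G w))"
    by (rule linmap_comp[OF linmap_tmap[OF assms(3,4)] linmap_tmap[OF assms(1,2)]])
  show "linmap (tmap (\<lambda>x. F' (F x)) (\<lambda>x. G' (G x)))"
    by (rule linmap_tmap[OF linmap_comp[OF assms(3,1)] linmap_comp[OF assms(4,2)]])
  fix u :: "'a \<Rightarrow> 'k" and v :: "'b \<Rightarrow> 'k" assume "u \<in> fsupp" "v \<in> fsupp"
  then show "tmap F' G' (tmap F G (tens u v)) = tmap (\<lambda>x. F' (F x)) (\<lambda>x. G' (G x)) (tens u v)"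
    using assms by (simp add: tmap_tens lin_fsupp linmap_comp[of F' F] linmap_comp[of G' G])
qed

lemma tmap_cong:
  fixes F :: "('a \<Rightarrow> 'k::field) \<Rightarrow> ('c \<Rightarrow> 'k)" and G :: "('b \<Rightarrow> 'k) \<Rightarrow> ('d \<Rightarrow> 'k)"
  assumes "linmap F" "linmap G" "linmap F'" "linmap G'" "w \<in> fsupp"
    "\<And>u. u \<in> fsupp \<Longrightarrow> F u = F' u" "\<And>u. u \<in> fsupp \<Longrightarrow> G u = G' u"
  shows "tmap F G w = tmap F' G' w"
proof (rule lin_eq_tens[of "tmap F G" "tmap F' G'", OF _ _ _ assms(5)])
  show "linmap (tmap F G)" "linmap (tmap F' G')"
    using assms by (auto intro!: linmap_tmap)
  fix u :: "'a \<Rightarrow> 'k" and v :: "'b \<Rightarrow> 'k" assume "u \<in> fsupp" "v \<in> fsupp"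
  then show "tmap F G (tens u v) = tmap F' G' (tens u v)"
    using assms by (simp add: tmap_tens)
qed

lemma linmap_tassoc: "linmap (tassoc :: (('a \<times> 'b) \<times> 'c \<Rightarrow> 'k::field) \<Rightarrow> _)"
  unfolding linmap_def
proof (intro conjI ballI allI)
  fix v :: "('a \<times> 'b) \<times> 'c \<Rightarrow> 'k" assume "v \<in> fsupp"
  moreover have "vsupp (tassoc v) = (\<lambda>((a, b), c). (a, (b, c))) ` vsupp v"
    by (force simp: vsupp_def tassoc_def image_iff)
  ultimately show "tassoc v \<in> fsupp" by (simp add: fsupp_iff)
qed (auto simp: tassoc_def vadd_def smult_def)

lemma linmap_tunassoc: "linmap (tunassoc :: ('a \<times> ('b \<times> 'c) \<Rightarrow> 'k::field) \<Rightarrow> _)"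
  unfolding linmap_def
proof (intro conjI ballI allI)
  fix v :: "'a \<times> ('b \<times> 'c) \<Rightarrow> 'k" assume "v \<in> fsupp"
  moreover have "vsupp (tunassoc v) = (\<lambda>(a, (b, c)). ((a, b), c)) ` vsupp v"
    by (force simp: vsupp_def tunassoc_def image_iff)
  ultimately show "tunassoc v \<in> fsupp" by (simp add: fsupp_iff)
qed (auto simp: tunassoc_def vadd_def smult_def)

lemma tassoc_tens: "tassoc (tens (tens a b) c) = tens a (tens b (c :: _ \<Rightarrow> 'k::semigroup_mult))"
  by (auto simp: tassoc_def tens_def mult.assoc)

lemma tunassoc_tens: "tunassoc (tens a (tens b c)) = tens (tens a b) (c :: _ \<Rightarrow> 'k::semigroup_mult)"
  by (auto simp: tunassoc_def tens_def mult.assoc)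

lemma tunassoc_tassoc[simp]: "tunassoc (tassoc w) = w"
  by (auto simp: tassoc_def tunassoc_def)

lemma tassoc_tunassoc[simp]: "tassoc (tunassoc w) = w"
  by (auto simp: tassoc_def tunassoc_def)

lemma linmap_tens_left:
  assumes "u \<in> fsupp"
  shows "linmap (\<lambda>v. tens u (v :: _ \<Rightarrow> 'k::field))"
  using assms unfolding linmap_def
  by (auto simp: tens_fsupp) (auto simp: tens_def vadd_def smult_def distrib_left mult_ac)

lemma linmap_tens_right:
  assumes "v \<in> fsupp"
  shows "linmap (\<lambda>u. tens u (v :: _ \<Rightarrow> 'k::field))"
  using assms unfolding linmap_def
  by (auto simp: tens_fsupp) (auto simp: tens_def vadd_def smult_def fun_eq_iff algebra_simps)

definition lf2lm :: "(('a \<Rightarrow> 'k) \<Rightarrow> 'k) \<Rightarrow> ('a \<Rightarrow> 'k) \<Rightarrow> unit \<Rightarrow> 'k" where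
  "lf2lm f = (\<lambda>v _. f v)"

lemma linmap_lf2lm: "linfun f \<Longrightarrow> linmap (lf2lm (f :: ('a \<Rightarrow> 'k::field) \<Rightarrow> 'k))"
  unfolding linmap_def linfun_def lf2lm_def
  by (auto simp: fsupp_iff vadd_def smult_def)

lemma linfun_expand:
  assumes "linfun f" "v \<in> fsupp"
  shows "f v = (\<Sum>x\<in>vsupp v. v x * f (delta x))"
proof -
  have "lf2lm f v () = lext (\<lambda>x. lf2lm f (delta x)) v ()"
    using lin_lext[OF linmap_lf2lm[OF assms(1)] assms(2)] by simp
  then show ?thesis by (simp add: lf2lm_def lext_def)
qed

lemma rcontr_tens:
  fixes u :: "'a \<Rightarrow> 'k::field"
  assumes f: "linfun f" and u: "u \<in> fsupp" and v: "v \<in> fsupp"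
  shows "rcontr f (tens u v) = smult (f v) u"
proof
  fix y
  have "rcontr f (tens u v) y = (\<Sum>x\<in>vsupp u. \<Sum>x'\<in>vsupp v. u x * v x' * (f (delta x') * delta x y))"
    unfolding rcontr_def lext_tens[OF u v] by (simp add: smult_def)
  also have "\<dots> = (\<Sum>x\<in>vsupp u. u x * delta x y) * (\<Sum>x'\<in>vsupp v. v x' * f (delta x'))"
    by (simp add: sum_product mult_ac)
  also have "\<dots> = u y * f v"
    using vec_expand[OF u] linfun_expand[OF f v] by (metis (no_types, lifting))
  finally show "rcontr f (tens u v) y = smult (f v) u y" by (simp add: smult_def mult.commute)
qed

lemma lcontr_tens:
  fixes u :: "'a \<Rightarrow> 'k::field"
  assumes f: "linfun f" and u: "u \<in> fsupp" and v: "v \<in> fsupp"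
  shows "lcontr f (tens u v) = smult (f u) v"
proof
  fix y
  have "lcontr f (tens u v) y = (\<Sum>x\<in>vsupp u. \<Sum>x'\<in>vsupp v. u x * v x' * (f (delta x) * delta x' y))"
    unfolding lcontr_def lext_tens[OF u v] by (simp add: smult_def)
  also have "\<dots> = (\<Sum>x\<in>vsupp u. u x * f (delta x)) * (\<Sum>x'\<in>vsupp v. v x' * delta x' y)"
    by (simp add: sum_product mult_ac)
  also have "\<dots> = f u * v y"
    using vec_expand[OF v] linfun_expand[OF f u] by (metis (no_types, lifting))
  finally show "lcontr f (tens u v) y = smult (f u) v y" by (simp add: smult_def)
qed

lemma linmap_rcontr: "linmap (rcontr (f :: ('b \<Rightarrow> 'k::field) \<Rightarrow> 'k) :: ('a \<times> 'b \<Rightarrow> 'k) \<Rightarrow> _)"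
  unfolding rcontr_def by (rule linmap_lext) (auto intro!: smult_fsupp delta_fsupp)

lemma linmap_lcontr: "linmap (lcontr (f :: ('a \<Rightarrow> 'k::field) \<Rightarrow> 'k) :: ('a \<times> 'b \<Rightarrow> 'k) \<Rightarrow> _)"
  unfolding lcontr_def by (rule linmap_lext) (auto intro!: smult_fsupp delta_fsupp)

lemma linmap_scal:
  assumes "linfun f" "z \<in> fsupp"
  shows "linmap (\<lambda>a. smult (f a) (z :: _ \<Rightarrow> 'k::field))"
  using assms unfolding linmap_def linfun_def
  by (auto simp: smult_fsupp) (auto simp: vadd_def smult_def distrib_right)


lemma linmap_o: "linmap F \<Longrightarrow> linmap G \<Longrightarrow> linmap (F \<circ> G)"
  by (simp add: linmap_def)

lemmas lin_intros = linmap_o linmap_tmap linmap_id linmap_tassoc linmap_tunassoc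
  linmap_tens_left linmap_tens_right linmap_rcontr linmap_lcontr linmap_scal

lemma tens_smult: "tens (smult c a) z = tens a (smult c (z :: _ \<Rightarrow> 'k::comm_ring_1))"
  by (auto simp: tens_def smult_def fun_eq_iff mult_ac)

lemma G1:
  fixes e :: "('b \<Rightarrow> 'k::field) \<Rightarrow> 'k" and y :: "'z \<Rightarrow> 'k" and v :: "'a \<times> 'b \<Rightarrow> 'k"
  assumes e: "linfun e" and y: "y \<in> fsupp" and v: "v \<in> fsupp"
  shows "tmap id (\<lambda>b. smult (e b) y) v = tens (rcontr e v) y"
proof -
  have "tmap id (\<lambda>b. smult (e b) y) v = ((\<lambda>u. tens u y) \<circ> rcontr e) v"
  proof (rule lin_eq_tens[OF _ _ _ v])
    show "linmap (tmap id (\<lambda>b. smult (e b) y))" "linmap ((\<lambda>u. tens u y) \<circ> rcontr e)"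
      using e y by (auto intro!: lin_intros)
    fix a :: "'a \<Rightarrow> 'k" and b :: "'b \<Rightarrow> 'k" assume "a \<in> fsupp" "b \<in> fsupp"
    then show "tmap id (\<lambda>b. smult (e b) y) (tens a b) = ((\<lambda>u. tens u y) \<circ> rcontr e) (tens a b)"
      using e y by (simp add: tmap_tens linmap_id linmap_scal rcontr_tens tens_smult)
  qed
  then show ?thesis by simp
qed

lemma G2:
  fixes e :: "('b \<Rightarrow> 'k::field) \<Rightarrow> 'k" and y :: "'z \<Rightarrow> 'k" and v :: "'b \<times> 'a \<Rightarrow> 'k"
  assumes e: "linfun e" and y: "y \<in> fsupp" and v: "v \<in> fsupp"
  shows "tmap (\<lambda>b. smult (e b) y) id v = tens y (lcontr e v)"
proof -
  have "tmap (\<lambda>b. smult (e b) y) id v = (tens y \<circ> lcontr e) v"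
  proof (rule lin_eq_tens[OF _ _ _ v])
    show "linmap (tmap (\<lambda>b. smult (e b) y) id)" "linmap (tens y \<circ> lcontr e)"
      using e y by (auto intro!: lin_intros)
    fix a :: "'b \<Rightarrow> 'k" and b :: "'a \<Rightarrow> 'k" assume "a \<in> fsupp" "b \<in> fsupp"
    then show "tmap (\<lambda>b. smult (e b) y) id (tens a b) = (tens y \<circ> lcontr e) (tens a b)"
      using e y by (simp add: tmap_tens linmap_id linmap_scal lcontr_tens tens_smult)
  qed
  then show ?thesis by simp
qed

lemma bij_lin:
  assumes "linmap F" "linmap G" "\<forall>w\<in>fsupp. G (F w) = w" "\<forall>w\<in>fsupp. F (G w) = w"
  shows "bij_betw F fsupp fsupp"
  by (rule bij_betw_byWitness[where f'=G]) (use assms in \<open>auto simp: lin_fsupp\<close>)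


locale hgs =
  fixes mA :: "('a \<times> 'a \<Rightarrow> 'k::field) \<Rightarrow> ('a \<Rightarrow> 'k)"
    and uA DA eA
    and mB :: "('b \<times> 'b \<Rightarrow> 'k) \<Rightarrow> ('b \<Rightarrow> 'k)"
    and uB DB eB
    and mZ :: "('z \<times> 'z \<Rightarrow> 'k) \<Rightarrow> ('z \<Rightarrow> 'k)"
    and uZ
    and mT :: "('t \<times> 't \<Rightarrow> 'k) \<Rightarrow> ('t \<Rightarrow> 'k)"
    and uT al be ga de S
  assumes H: "hopf_galois_system mA uA DA eA mB uB DB eB mZ uZ mT uT al be ga de S"
begin

lemmas HU = H[unfolded hopf_galois_system_def is_algebra_def is_bialgebra_def left_comod_alg_def
    right_comod_alg_def alg_hom_def]

lemma lmZ: "linmap mZ" using HU by (elim conjE) assumption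
lemma uZf: "uZ \<in> fsupp" using HU by (elim conjE) assumption
lemma asZ: "\<forall>w\<in>fsupp. mZ (tmap mZ id w) = mZ (tmap id mZ (tassoc w))" using HU by (elim conjE) assumption
lemma unZ: "\<forall>v\<in>fsupp. mZ (tens uZ v) = v \<and> mZ (tens v uZ) = v" using HU by (elim conjE) assumption
lemma lDA: "linmap DA" using HU by (elim conjE) assumption
lemma eAl: "linfun eA" using HU by (elim conjE) assumption
lemma cDA: "\<forall>v\<in>fsupp. lcontr eA (DA v) = v \<and> rcontr eA (DA v) = v" using HU by (elim conjE) assumption
lemma lDB: "linmap DB" using HU by (elim conjE) assumption
lemma eBl: "linfun eB" using HU by (elim conjE) assumption
lemma cDB: "\<forall>v\<in>fsupp. lcontr eB (DB v) = v \<and> rcontr eB (DB v) = v" using HU by (elim conjE) assumption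
lemma lal: "linmap al" using HU by (elim conjE) assumption
lemma cal: "\<forall>z\<in>fsupp. lcontr eA (al z) = z" using HU by (elim conjE) assumption
lemma lbe: "linmap be" using HU by (elim conjE) assumption
lemma cbe: "\<forall>z\<in>fsupp. rcontr eB (be z) = z" using HU by (elim conjE) assumption
lemma lga: "linmap ga" using HU by (elim conjE) assumption
lemma lde: "linmap de" using HU by (elim conjE) assumption
lemma lS: "linmap S" using HU by (elim conjE) assumption
lemma h3a: "\<forall>z\<in>fsupp. tassoc (tmap ga id (al z)) = tmap id de (be z)" using HU by (elim conjE) assumption
lemma h3b: "\<forall>a\<in>fsupp. tassoc (tmap al id (ga a)) = tmap id ga (DA a)" using HU by (elim conjE) assumption
lemma h3c: "\<forall>b\<in>fsupp. tmap id be (de b) = tassoc (tmap de id (DB b))" using HU by (elim conjE) assumption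
lemma h4a: "\<forall>a\<in>fsupp. mZ (tmap id S (ga a)) = smult (eA a) uZ" using HU by (elim conjE) assumption
lemma h4b: "\<forall>b\<in>fsupp. mZ (tmap S id (de b)) = smult (eB b) uZ" using HU by (elim conjE) assumption

lemma fs0[simp]: "x \<in> fsupp \<Longrightarrow> S x \<in> fsupp" by (rule lin_fsupp[OF lS])
lemma fs1[simp]: "x \<in> fsupp \<Longrightarrow> al x \<in> fsupp" by (rule lin_fsupp[OF lal])
lemma fs2[simp]: "x \<in> fsupp \<Longrightarrow> be x \<in> fsupp" by (rule lin_fsupp[OF lbe])
lemma fs3[simp]: "x \<in> fsupp \<Longrightarrow> ga x \<in> fsupp" by (rule lin_fsupp[OF lga])
lemma fs4[simp]: "x \<in> fsupp \<Longrightarrow> de x \<in> fsupp" by (rule lin_fsupp[OF lde])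
lemma fs5[simp]: "x \<in> fsupp \<Longrightarrow> mZ x \<in> fsupp" by (rule lin_fsupp[OF lmZ])
lemma fs6[simp]: "x \<in> fsupp \<Longrightarrow> DA x \<in> fsupp" by (rule lin_fsupp[OF lDA])
lemma fs7[simp]: "x \<in> fsupp \<Longrightarrow> DB x \<in> fsupp" by (rule lin_fsupp[OF lDB])

lemmas lins[simp] = lmZ lDA lDB lal lbe lga lde lS linmap_id
lemmas [simp] = tens_fsupp uZf

lemma mul_assoc:
  assumes "x \<in> fsupp" "y \<in> fsupp" "z \<in> fsupp"
  shows "mZ (tens (mZ (tens x y)) z) = mZ (tens x (mZ (tens y z)))"
proof -
  have "mZ (tmap mZ id (tens (tens x y) z)) = mZ (tmap id mZ (tassoc (tens (tens x y) z)))"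
    using asZ assms by simp
  then show ?thesis using assms by (simp add: tmap_tens tassoc_tens)
qed

lemma mul_smult_l:
  assumes "y \<in> fsupp" shows "mZ (tens (smult c uZ) y) = smult c y"
proof -
  have "tens (smult c uZ) y = smult c (tens uZ y)" by (auto simp: tens_def smult_def fun_eq_iff mult_ac)
  then show ?thesis using assms unZ by (simp add: lin_smult)
qed

lemma mul_smult_r:
  assumes "y \<in> fsupp" shows "mZ (tens y (smult c uZ)) = smult c y"
proof -
  have "tens y (smult c uZ) = smult c (tens y uZ)" by (auto simp: tens_def smult_def fun_eq_iff mult_ac)
  then show ?thesis using assms unZ by (simp add: lin_smult)
qed

definition "Kl = tmap id mZ \<circ> tassoc \<circ> tmap al id"
definition "Linv = tmap id mZ \<circ> tassoc \<circ> tmap (tmap id S \<circ> ga) id"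

lemma lKl: "linmap Kl" unfolding Kl_def by (auto intro!: lin_intros)
lemma lsig: "linmap (tmap id S \<circ> ga)" by (auto intro!: lin_intros)
lemma ltau: "linmap (tmap S id \<circ> de)" by (auto intro!: lin_intros)
lemma lLinv: "linmap Linv" unfolding Linv_def by (auto intro!: lin_intros)

lemma C1:
  assumes z: "z \<in> fsupp" and w: "w \<in> fsupp"
  shows "Kl (tmap id mZ (tassoc (tens (tmap id S w) z)))
     = tmap id mZ (tassoc (tmap id (mZ \<circ> (\<lambda>v. tens v z) \<circ> S) (tmap al id w)))"
proof -
  have lr: "linmap (mZ \<circ> (\<lambda>v. tens v z) \<circ> S)" using z by (auto intro!: lin_intros)
  have "(Kl \<circ> tmap id mZ \<circ> tassoc \<circ> (\<lambda>v. tens v z) \<circ> tmap id S) w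
      = (tmap id mZ \<circ> tassoc \<circ> tmap id (mZ \<circ> (\<lambda>v. tens v z) \<circ> S) \<circ> tmap al id) w"
  proof (rule lin_eq_tens[OF _ _ _ w])
    show "linmap (Kl \<circ> tmap id mZ \<circ> tassoc \<circ> (\<lambda>v. tens v z) \<circ> tmap id S)"
      using z lKl by (auto intro!: lin_intros)
    show "linmap (tmap id mZ \<circ> tassoc \<circ> tmap id (mZ \<circ> (\<lambda>v. tens v z) \<circ> S) \<circ> tmap al id)"
      using z lr by (auto intro!: lin_intros)
    fix x :: "'z \<Rightarrow> 'k" and t :: "'t \<Rightarrow> 'k" assume "x \<in> fsupp" "t \<in> fsupp"
    then show "(Kl \<circ> tmap id mZ \<circ> tassoc \<circ> (\<lambda>v. tens v z) \<circ> tmap id S) (tens x t)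
      = (tmap id mZ \<circ> tassoc \<circ> tmap id (mZ \<circ> (\<lambda>v. tens v z) \<circ> S) \<circ> tmap al id) (tens x t)"
      using z lr by (simp add: tmap_tens tassoc_tens Kl_def)
  qed
  then show ?thesis by simp
qed


definition "Rz z = tmap id mZ \<circ> tassoc \<circ> tmap id (mZ \<circ> (\<lambda>v. tens v z) \<circ> S)"

lemma lRz: "z \<in> fsupp \<Longrightarrow> linmap (Rz z)" unfolding Rz_def by (auto intro!: lin_intros)

lemma C2':
  assumes z: "z \<in> fsupp" and a: "a \<in> fsupp" and w: "w \<in> fsupp"
  shows "Rz z (tunassoc (tens a w)) = tens a (mZ (tens (mZ (tmap id S w)) z))"
proof -
  have lr: "linmap (mZ \<circ> (\<lambda>v. tens v z) \<circ> S)" using z by (auto intro!: lin_intros)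
  have "(Rz z \<circ> tunassoc \<circ> tens a) w = (tens a \<circ> mZ \<circ> (\<lambda>v. tens v z) \<circ> mZ \<circ> tmap id S) w"
  proof (rule lin_eq_tens[OF _ _ _ w])
    show "linmap (Rz z \<circ> tunassoc \<circ> tens a)" using z a lRz by (auto intro!: lin_intros)
    show "linmap (tens a \<circ> mZ \<circ> (\<lambda>v. tens v z) \<circ> mZ \<circ> tmap id S)" using z a by (auto intro!: lin_intros)
    fix x :: "'z \<Rightarrow> 'k" and t :: "'t \<Rightarrow> 'k" assume "x \<in> fsupp" "t \<in> fsupp"
    then show "(Rz z \<circ> tunassoc \<circ> tens a) (tens x t) = (tens a \<circ> mZ \<circ> (\<lambda>v. tens v z) \<circ> mZ \<circ> tmap id S) (tens x t)"
      using z a lr by (simp add: tmap_tens tassoc_tens tunassoc_tens Rz_def mul_assoc)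
  qed
  then show ?thesis by simp
qed

lemma C2:
  fixes v :: "'a \<times> 'a \<Rightarrow> 'k"
  assumes z: "z \<in> fsupp" and v: "v \<in> fsupp"
  shows "Rz z (tunassoc (tmap id ga v)) = tens (rcontr eA v) z"
proof -
  have "(Rz z \<circ> tunassoc \<circ> tmap id ga) v = ((\<lambda>u. tens u z) \<circ> rcontr eA) v"
  proof (rule lin_eq_tens[OF _ _ _ v])
    show "linmap (Rz z \<circ> tunassoc \<circ> tmap id ga)" using z lRz by (auto intro!: lin_intros)
    show "linmap ((\<lambda>u. tens u z) \<circ> rcontr eA)" using z by (auto intro!: lin_intros)
    fix a :: "'a \<Rightarrow> 'k" and b :: "'a \<Rightarrow> 'k" assume "a \<in> fsupp" "b \<in> fsupp"
    then show "(Rz z \<circ> tunassoc \<circ> tmap id ga) (tens a b) = ((\<lambda>u. tens u z) \<circ> rcontr eA) (tens a b)"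
      using z h4a eAl unZ by (simp add: tmap_tens C2' mul_smult_l rcontr_tens tens_smult smult_fsupp)
  qed
  then show ?thesis by simp
qed

lemma part1:
  assumes w: "w \<in> fsupp" shows "Kl (Linv w) = w"
proof -
  have "(Kl \<circ> Linv) w = id w"
  proof (rule lin_eq_tens[OF _ _ _ w])
    show "linmap (Kl \<circ> Linv)" using lKl lLinv by (rule linmap_o)
    show "linmap id" by simp
    fix a :: "'a \<Rightarrow> 'k" and z :: "'z \<Rightarrow> 'k" assume a: "a \<in> fsupp" and z: "z \<in> fsupp"
    have "Linv (tens a z) = tmap id mZ (tassoc (tens (tmap id S (ga a)) z))"
      using a z by (simp add: Linv_def tmap_tens linmap_o lsig)
    then have "Kl (Linv (tens a z)) = Rz z (tmap al id (ga a))"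
      using C1[OF z, of "ga a"] a by (simp add: Rz_def)
    also have "\<dots> = Rz z (tunassoc (tmap id ga (DA a)))"
      using h3b a by (metis tunassoc_tassoc)
    also have "\<dots> = tens a z" using C2[OF z, of "DA a"] a cDA by simp
    finally show "(Kl \<circ> Linv) (tens a z) = id (tens a z)" by simp
  qed
  then show ?thesis by simp
qed


definition "My y = tmap id (mZ \<circ> (\<lambda>v. tens v y) \<circ> mZ \<circ> tmap S id)"

lemma lMy: "y \<in> fsupp \<Longrightarrow> linmap (My y)" unfolding My_def by (auto intro!: lin_intros)

lemma C3':
  fixes w :: "'z \<times> 't \<Rightarrow> 'k"
  assumes x: "x \<in> fsupp" and y: "y \<in> fsupp" and w: "w \<in> fsupp"
  shows "tmap id mZ (tassoc (tens (tmap id S w) (mZ (tens x y)))) = My y (tassoc (tens w x))"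
proof -
  have lr: "linmap (mZ \<circ> (\<lambda>v. tens v y) \<circ> mZ \<circ> tmap S id)" using y by (auto intro!: lin_intros)
  have "(tmap id mZ \<circ> tassoc \<circ> (\<lambda>v. tens v (mZ (tens x y))) \<circ> tmap id S) w = (My y \<circ> tassoc \<circ> (\<lambda>v. tens v x)) w"
  proof (rule lin_eq_tens[OF _ _ _ w])
    show "linmap (tmap id mZ \<circ> tassoc \<circ> (\<lambda>v. tens v (mZ (tens x y))) \<circ> tmap id S)" using x y by (auto intro!: lin_intros)
    show "linmap (My y \<circ> tassoc \<circ> (\<lambda>v. tens v x))" using x y lMy by (auto intro!: lin_intros)
    fix z :: "'z \<Rightarrow> 'k" and t :: "'t \<Rightarrow> 'k" assume "z \<in> fsupp" "t \<in> fsupp"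
    then show "(tmap id mZ \<circ> tassoc \<circ> (\<lambda>v. tens v (mZ (tens x y))) \<circ> tmap id S) (tens z t) = (My y \<circ> tassoc \<circ> (\<lambda>v. tens v x)) (tens z t)"
      using x y lr by (simp add: tmap_tens tassoc_tens My_def mul_assoc)
  qed
  then show ?thesis by simp
qed

lemma C3:
  assumes y: "y \<in> fsupp" and u: "u \<in> fsupp"
  shows "Linv (tmap id mZ (tassoc (tens u y))) = My y (tassoc (tmap ga id u))"
proof -
  have "(Linv \<circ> tmap id mZ \<circ> tassoc \<circ> (\<lambda>v. tens v y)) u = (My y \<circ> tassoc \<circ> tmap ga id) u"
  proof (rule lin_eq_tens[OF _ _ _ u])
    show "linmap (Linv \<circ> tmap id mZ \<circ> tassoc \<circ> (\<lambda>v. tens v y))" using y lLinv by (auto intro!: lin_intros)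
    show "linmap (My y \<circ> tassoc \<circ> tmap ga id)" using y lMy by (auto intro!: lin_intros)
    fix a :: "'a \<Rightarrow> 'k" and x :: "'z \<Rightarrow> 'k" assume a: "a \<in> fsupp" and x: "x \<in> fsupp"
    have "Linv (tmap id mZ (tassoc (tens (tens a x) y))) = tmap id mZ (tassoc (tens (tmap id S (ga a)) (mZ (tens x y))))"
      using a x y by (simp add: Linv_def tmap_tens tassoc_tens lsig)
    also have "\<dots> = My y (tassoc (tens (ga a) x))" using C3'[OF x y, of "ga a"] a by simp
    finally show "(Linv \<circ> tmap id mZ \<circ> tassoc \<circ> (\<lambda>v. tens v y)) (tens a x) = (My y \<circ> tassoc \<circ> tmap ga id) (tens a x)"
      using a x by (simp add: tmap_tens)
  qed
  then show ?thesis by simp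
qed

lemma part2:
  assumes w: "w \<in> fsupp" shows "Linv (Kl w) = w"
proof -
  have "(Linv \<circ> Kl) w = id w"
  proof (rule lin_eq_tens[OF _ _ _ w])
    show "linmap (Linv \<circ> Kl)" using lLinv lKl by (rule linmap_o)
    show "linmap id" by simp
    fix x :: "'z \<Rightarrow> 'k" and y :: "'z \<Rightarrow> 'k" assume x: "x \<in> fsupp" and y: "y \<in> fsupp"
    have lr: "linmap (mZ \<circ> (\<lambda>v. tens v y) \<circ> mZ \<circ> tmap S id)" using y by (auto intro!: lin_intros)
    have "Linv (Kl (tens x y)) = Linv (tmap id mZ (tassoc (tens (al x) y)))"
      using x y by (simp add: Kl_def tmap_tens)
    also have "\<dots> = My y (tmap id de (be x))" using C3[OF y, of "al x"] x h3a by simp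
    also have "\<dots> = tmap (\<lambda>x. id (id x)) (\<lambda>x. (mZ \<circ> (\<lambda>v. tens v y) \<circ> mZ \<circ> tmap S id) (de x)) (be x)"
      unfolding My_def by (rule tmap_comp[OF linmap_id lde linmap_id lr]) (simp add: x)
    also have "\<dots> = tmap id (\<lambda>b. smult (eB b) y) (be x)"
      by (rule tmap_cong[OF linmap_comp[OF linmap_id linmap_id] linmap_comp[OF lr lde] linmap_id linmap_scal[OF eBl y]])
        (simp_all add: x y h4b mul_smult_l)
    also have "\<dots> = tens x y" using G1[OF eBl y, of "be x"] x cbe by simp
    finally show "(Linv \<circ> Kl) (tens x y) = id (tens x y)" by simp
  qed
  then show ?thesis by simp
qed



definition "Kr = tmap mZ id \<circ> tunassoc \<circ> tmap id be"
definition "Rinv = tmap mZ id \<circ> tunassoc \<circ> tmap id (tmap S id \<circ> de)"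
definition "Rz' z = tmap mZ id \<circ> tunassoc \<circ> tmap (mZ \<circ> tens z \<circ> S) id"
definition "Mx x = tmap (mZ \<circ> tens x \<circ> mZ \<circ> tmap id S) id"

lemma lKr: "linmap Kr" unfolding Kr_def by (auto intro!: lin_intros)
lemma lRinv: "linmap Rinv" unfolding Rinv_def by (auto intro!: lin_intros)
lemma lRz': "z \<in> fsupp \<Longrightarrow> linmap (Rz' z)" unfolding Rz'_def by (auto intro!: lin_intros)
lemma lMx: "x \<in> fsupp \<Longrightarrow> linmap (Mx x)" unfolding Mx_def by (auto intro!: lin_intros)

lemma C1r:
  assumes z: "z \<in> fsupp" and w: "w \<in> fsupp"
  shows "Kr (tmap mZ id (tunassoc (tens z (tmap S id w)))) = Rz' z (tmap id be w)"
proof -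
  have lr: "linmap (mZ \<circ> tens z \<circ> S)" using z by (auto intro!: lin_intros)
  have "(Kr \<circ> tmap mZ id \<circ> tunassoc \<circ> tens z \<circ> tmap S id) w = (Rz' z \<circ> tmap id be) w"
  proof (rule lin_eq_tens[OF _ _ _ w])
    show "linmap (Kr \<circ> tmap mZ id \<circ> tunassoc \<circ> tens z \<circ> tmap S id)" using z lKr by (auto intro!: lin_intros)
    show "linmap (Rz' z \<circ> tmap id be)" using z lRz' by (auto intro!: lin_intros)
    fix t :: "'t \<Rightarrow> 'k" and x :: "'z \<Rightarrow> 'k" assume "t \<in> fsupp" "x \<in> fsupp"
    then show "(Kr \<circ> tmap mZ id \<circ> tunassoc \<circ> tens z \<circ> tmap S id) (tens t x) = (Rz' z \<circ> tmap id be) (tens t x)"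
      using z lr by (simp add: tmap_tens tunassoc_tens Kr_def Rz'_def)
  qed
  then show ?thesis by simp
qed

lemma C2r':
  assumes z: "z \<in> fsupp" and b: "b \<in> fsupp" and w: "w \<in> fsupp"
  shows "Rz' z (tassoc (tens w b)) = tens (mZ (tens z (mZ (tmap S id w)))) b"
proof -
  have lr: "linmap (mZ \<circ> tens z \<circ> S)" using z by (auto intro!: lin_intros)
  have "(Rz' z \<circ> tassoc \<circ> (\<lambda>v. tens v b)) w = ((\<lambda>v. tens v b) \<circ> mZ \<circ> tens z \<circ> mZ \<circ> tmap S id) w"
  proof (rule lin_eq_tens[OF _ _ _ w])
    show "linmap (Rz' z \<circ> tassoc \<circ> (\<lambda>v. tens v b))" using z b lRz' by (auto intro!: lin_intros)
    show "linmap ((\<lambda>v. tens v b) \<circ> mZ \<circ> tens z \<circ> mZ \<circ> tmap S id)" using z b by (auto intro!: lin_intros)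
    fix t :: "'t \<Rightarrow> 'k" and x :: "'z \<Rightarrow> 'k" assume "t \<in> fsupp" "x \<in> fsupp"
    then show "(Rz' z \<circ> tassoc \<circ> (\<lambda>v. tens v b)) (tens t x) = ((\<lambda>v. tens v b) \<circ> mZ \<circ> tens z \<circ> mZ \<circ> tmap S id) (tens t x)"
      using z b lr by (simp add: tmap_tens tassoc_tens tunassoc_tens Rz'_def mul_assoc)
  qed
  then show ?thesis by simp
qed

lemma C2r:
  fixes v :: "'b \<times> 'b \<Rightarrow> 'k"
  assumes z: "z \<in> fsupp" and v: "v \<in> fsupp"
  shows "Rz' z (tassoc (tmap de id v)) = tens z (lcontr eB v)"
proof -
  have "(Rz' z \<circ> tassoc \<circ> tmap de id) v = (tens z \<circ> lcontr eB) v"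
  proof (rule lin_eq_tens[OF _ _ _ v])
    show "linmap (Rz' z \<circ> tassoc \<circ> tmap de id)" using z lRz' by (auto intro!: lin_intros)
    show "linmap (tens z \<circ> lcontr eB)" using z by (auto intro!: lin_intros)
    fix a :: "'b \<Rightarrow> 'k" and b :: "'b \<Rightarrow> 'k" assume "a \<in> fsupp" "b \<in> fsupp"
    then show "(Rz' z \<circ> tassoc \<circ> tmap de id) (tens a b) = (tens z \<circ> lcontr eB) (tens a b)"
      using z h4b eBl unZ by (simp add: tmap_tens C2r' mul_smult_r lcontr_tens tens_smult smult_fsupp)
  qed
  then show ?thesis by simp
qed

lemma part3:
  assumes w: "w \<in> fsupp" shows "Kr (Rinv w) = w"
proof -
  have "(Kr \<circ> Rinv) w = id w"
  proof (rule lin_eq_tens[OF _ _ _ w])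
    show "linmap (Kr \<circ> Rinv)" using lKr lRinv by (rule linmap_o)
    show "linmap id" by simp
    fix z :: "'z \<Rightarrow> 'k" and b :: "'b \<Rightarrow> 'k" assume z: "z \<in> fsupp" and b: "b \<in> fsupp"
    have "Rinv (tens z b) = tmap mZ id (tunassoc (tens z (tmap S id (de b))))"
      using b z by (simp add: Rinv_def tmap_tens ltau)
    then have "Kr (Rinv (tens z b)) = Rz' z (tmap id be (de b))"
      using C1r[OF z, of "de b"] b by simp
    also have "\<dots> = Rz' z (tassoc (tmap de id (DB b)))"
      using h3c b by simp
    also have "\<dots> = tens z b" using C2r[OF z, of "DB b"] b cDB by simp
    finally show "(Kr \<circ> Rinv) (tens z b) = id (tens z b)" by simp
  qed
  then show ?thesis by simp
qed

lemma C3r':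
  fixes w :: "'t \<times> 'z \<Rightarrow> 'k"
  assumes x: "x \<in> fsupp" and x': "x' \<in> fsupp" and w: "w \<in> fsupp"
  shows "tmap mZ id (tunassoc (tens (mZ (tens x x')) (tmap S id w))) = Mx x (tunassoc (tens x' w))"
proof -
  have lr: "linmap (mZ \<circ> tens x \<circ> mZ \<circ> tmap id S)" using x by (auto intro!: lin_intros)
  have "(tmap mZ id \<circ> tunassoc \<circ> tens (mZ (tens x x')) \<circ> tmap S id) w = (Mx x \<circ> tunassoc \<circ> tens x') w"
  proof (rule lin_eq_tens[OF _ _ _ w])
    show "linmap (tmap mZ id \<circ> tunassoc \<circ> tens (mZ (tens x x')) \<circ> tmap S id)" using x x' by (auto intro!: lin_intros)
    show "linmap (Mx x \<circ> tunassoc \<circ> tens x')" using x x' lMx by (auto intro!: lin_intros)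
    fix t :: "'t \<Rightarrow> 'k" and z :: "'z \<Rightarrow> 'k" assume "t \<in> fsupp" "z \<in> fsupp"
    then show "(tmap mZ id \<circ> tunassoc \<circ> tens (mZ (tens x x')) \<circ> tmap S id) (tens t z) = (Mx x \<circ> tunassoc \<circ> tens x') (tens t z)"
      using x x' lr by (simp add: tmap_tens tunassoc_tens Mx_def mul_assoc)
  qed
  then show ?thesis by simp
qed

lemma C3r:
  assumes x: "x \<in> fsupp" and u: "u \<in> fsupp"
  shows "Rinv (tmap mZ id (tunassoc (tens x u))) = Mx x (tunassoc (tmap id de u))"
proof -
  have "(Rinv \<circ> tmap mZ id \<circ> tunassoc \<circ> tens x) u = (Mx x \<circ> tunassoc \<circ> tmap id de) u"
  proof (rule lin_eq_tens[OF _ _ _ u])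
    show "linmap (Rinv \<circ> tmap mZ id \<circ> tunassoc \<circ> tens x)" using x lRinv by (auto intro!: lin_intros)
    show "linmap (Mx x \<circ> tunassoc \<circ> tmap id de)" using x lMx by (auto intro!: lin_intros)
    fix x' :: "'z \<Rightarrow> 'k" and b :: "'b \<Rightarrow> 'k" assume x': "x' \<in> fsupp" and b: "b \<in> fsupp"
    have "Rinv (tmap mZ id (tunassoc (tens x (tens x' b)))) = tmap mZ id (tunassoc (tens (mZ (tens x x')) (tmap S id (de b))))"
      using x x' b by (simp add: Rinv_def tmap_tens tunassoc_tens ltau)
    also have "\<dots> = Mx x (tunassoc (tens x' (de b)))" using C3r'[OF x x', of "de b"] b by simp
    finally show "(Rinv \<circ> tmap mZ id \<circ> tunassoc \<circ> tens x) (tens x' b) = (Mx x \<circ> tunassoc \<circ> tmap id de) (tens x' b)"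
      using x' b by (simp add: tmap_tens)
  qed
  then show ?thesis by simp
qed

lemma part4:
  assumes w: "w \<in> fsupp" shows "Rinv (Kr w) = w"
proof -
  have "(Rinv \<circ> Kr) w = id w"
  proof (rule lin_eq_tens[OF _ _ _ w])
    show "linmap (Rinv \<circ> Kr)" using lRinv lKr by (rule linmap_o)
    show "linmap id" by simp
    fix x :: "'z \<Rightarrow> 'k" and y :: "'z \<Rightarrow> 'k" assume x: "x \<in> fsupp" and y: "y \<in> fsupp"
    have lr: "linmap (mZ \<circ> tens x \<circ> mZ \<circ> tmap id S)" using x by (auto intro!: lin_intros)
    have "Rinv (Kr (tens x y)) = Rinv (tmap mZ id (tunassoc (tens x (be y))))"
      using x y by (simp add: Kr_def tmap_tens)
    also have "\<dots> = Mx x (tunassoc (tmap id de (be y)))" using C3r[OF x, of "be y"] y by simp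
    also have "\<dots> = Mx x (tmap ga id (al y))" using h3a y by (metis tunassoc_tassoc)
    also have "\<dots> = tmap (\<lambda>a. (mZ \<circ> tens x \<circ> mZ \<circ> tmap id S) (ga a)) (\<lambda>x. id (id x)) (al y)"
      unfolding Mx_def by (rule tmap_comp[OF lga linmap_id lr linmap_id]) (simp add: y)
    also have "\<dots> = tmap (\<lambda>a. smult (eA a) x) id (al y)"
      by (rule tmap_cong[OF linmap_comp[OF lr lga] linmap_comp[OF linmap_id linmap_id] linmap_scal[OF eAl x] linmap_id])
        (simp_all add: x y h4a mul_smult_r)
    also have "\<dots> = tens x y" using G2[OF eAl x, of "al y"] y cal by simp
    finally show "(Rinv \<circ> Kr) (tens x y) = id (tens x y)" by simp
  qed
  then show ?thesis by simp
qed

lemma main: "bij_betw (kappa_l al mZ) fsupp fsupp \<and> bij_betw (kappa_r be mZ) fsupp fsupp"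
proof
  have "kappa_l al mZ = Kl" by (simp add: kappa_l_def Kl_def fun_eq_iff)
  then show "bij_betw (kappa_l al mZ) fsupp fsupp"
    using bij_lin[OF lKl lLinv] part1 part2 by simp
  have "kappa_r be mZ = Kr" by (simp add: kappa_r_def Kr_def fun_eq_iff)
  then show "bij_betw (kappa_r be mZ) fsupp fsupp"
    using bij_lin[OF lKr lRinv] part3 part4 by simp
qed

end


theorem theorem1p2:
  fixes mA :: "('a \<times> 'a \<Rightarrow> 'k::field) \<Rightarrow> ('a \<Rightarrow> 'k)"
    and mB :: "('b \<times> 'b \<Rightarrow> 'k) \<Rightarrow> ('b \<Rightarrow> 'k)"
    and mZ :: "('z \<times> 'z \<Rightarrow> 'k) \<Rightarrow> ('z \<Rightarrow> 'k)"
    and mT :: "('t \<times> 't \<Rightarrow> 'k) \<Rightarrow> ('t \<Rightarrow> 'k)"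
  assumes "hopf_galois_system mA uA DA eA mB uB DB eB mZ uZ mT uT al be ga de S"
  shows "bij_betw (kappa_l al mZ) fsupp fsupp \<and> bij_betw (kappa_r be mZ) fsupp fsupp"
  using hgs.main[OF hgs.intro[OF assms]] .

end
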